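(* Let $C\subseteq\mathbb{R}^n$ be a full-dimensional closed convex cone with lineality space $L$, and let $S\subseteq\mathbb{R}^n$ be closed. Then $C$ is maximal $S$-free if and only if $C\cap L^\perp$ is maximal $\operatorname{cl}(\operatorname{proj}_{L^\perp}S)$-free (as a subset of the space $L^\perp$).
   Context: A convex set $C$ is $S$-free if $\operatorname{int}(C)\cap S=\emptyset$ and maximal $S$-free if it is $S$-free and no $S$-free convex set strictly contains it; for subsets of the subspace $L^\perp$, interiors are taken relative to $L^\perp$ and competing convex sets are subsets of $L^\perp$. $\operatorname{proj}_{L^\perp}$ is the orthogonal projection onto $L^\perp$ and $\operatorname{cl}$ denotes closure. *)

theory Defs
  imports "HOL-Analysis.Analysis"
begin

definition lineality_space :: "'a::real_vector set \<Rightarrow> 'a set" where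
  "lineality_space C = {d. \<forall>x\<in>C. \<forall>t::real. x + t *\<^sub>R d \<in> C}"

definition proj_onto :: "'a::real_inner set \<Rightarrow> 'a \<Rightarrow> 'a" where
  "proj_onto V x = (THE y. y \<in> V \<and> (\<forall>v\<in>V. (x - y) \<bullet> v = 0))"

definition S_free :: "'a::real_normed_vector set \<Rightarrow> 'a set \<Rightarrow> bool" where
  "S_free S C \<longleftrightarrow> convex C \<and> interior C \<inter> S = {}"

definition maximal_S_free :: "'a::real_normed_vector set \<Rightarrow> 'a set \<Rightarrow> bool" where
  "maximal_S_free S C \<longleftrightarrow> S_free S C \<and> (\<forall>D. S_free S D \<and> C \<subseteq> D \<longrightarrow> D = C)"

definition S_free_in :: "'a::real_normed_vector set \<Rightarrow> 'a set \<Rightarrow> 'a set \<Rightarrow> bool" where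
  "S_free_in V S C \<longleftrightarrow> C \<subseteq> V \<and> convex C \<and> ((top_of_set V) interior_of C) \<inter> S = {}"

definition maximal_S_free_in :: "'a::real_normed_vector set \<Rightarrow> 'a set \<Rightarrow> 'a set \<Rightarrow> bool" where
  "maximal_S_free_in V S C \<longleftrightarrow> S_free_in V S C \<and> (\<forall>D. S_free_in V S D \<and> C \<subseteq> D \<longrightarrow> D = C)"

end

theory Submission
  imports Defs
begin

lemma proj_char:
  fixes L :: "'a::euclidean_space set"
  assumes "subspace L" "y \<in> L\<^sup>\<bottom>" "x - y \<in> L"
  shows "proj_onto (L\<^sup>\<bottom>) x = y"
  unfolding proj_onto_def
proof (rule the_equality)
  show "y \<in> L\<^sup>\<bottom> \<and> (\<forall>v\<in>L\<^sup>\<bottom>. (x - y) \<bullet> v = 0)"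
    using assms by (auto simp: orthogonal_comp_def orthogonal_def)
next
  fix z assume z: "z \<in> L\<^sup>\<bottom> \<and> (\<forall>v\<in>L\<^sup>\<bottom>. (x - z) \<bullet> v = 0)"
  have "z - y \<in> L\<^sup>\<bottom>" using z assms(2) subspace_orthogonal_comp subspace_diff by blast
  moreover have "(x - y) \<bullet> (z - y) = 0" using assms calculation
    by (auto simp: orthogonal_comp_def orthogonal_def)
  moreover have "(x - z) \<bullet> (z - y) = 0" using z calculation(1) by blast
  moreover have "(z - y) \<bullet> (z - y) = (x - y) \<bullet> (z - y) - (x - z) \<bullet> (z - y)"
    by (simp add: inner_diff_left)
  ultimately have "(z - y) \<bullet> (z - y) = 0" by simp
  then show "z = y" by simp
qed

lemma proj_exists:
  fixes L :: "'a::euclidean_space set"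
  assumes "subspace L"
  shows "proj_onto (L\<^sup>\<bottom>) x \<in> L\<^sup>\<bottom> \<and> x - proj_onto (L\<^sup>\<bottom>) x \<in> L"
proof -
  obtain y z where y: "y \<in> span L" and z: "\<And>w. w \<in> span L \<Longrightarrow> orthogonal z w" and xyz: "x = y + z"
    using orthogonal_subspace_decomp_exists by blast
  have yL: "y \<in> L" using y assms span_eq_iff by blast
  have zV: "z \<in> L\<^sup>\<bottom>" using z assms span_superset
    by (auto simp: orthogonal_comp_def orthogonal_commute)
  have "proj_onto (L\<^sup>\<bottom>) x = z" using proj_char[OF assms zV] xyz yL by simp
  then show ?thesis using zV xyz yL by simp
qed

lemma proj_diff:
  fixes L :: "'a::euclidean_space set"
  assumes "subspace L"
  shows "proj_onto (L\<^sup>\<bottom>) (x - y) = proj_onto (L\<^sup>\<bottom>) x - proj_onto (L\<^sup>\<bottom>) y"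
proof (rule proj_char[OF assms])
  show "proj_onto (L\<^sup>\<bottom>) x - proj_onto (L\<^sup>\<bottom>) y \<in> L\<^sup>\<bottom>"
    using proj_exists[OF assms] subspace_orthogonal_comp subspace_diff by blast
  have "(x - proj_onto (L\<^sup>\<bottom>) x) - (y - proj_onto (L\<^sup>\<bottom>) y) \<in> L"
    using proj_exists[OF assms] assms subspace_diff by blast
  then show "x - y - (proj_onto (L\<^sup>\<bottom>) x - proj_onto (L\<^sup>\<bottom>) y) \<in> L"
    by (simp add: algebra_simps)
qed

lemma proj_norm:
  fixes L :: "'a::euclidean_space set"
  assumes "subspace L"
  shows "norm (proj_onto (L\<^sup>\<bottom>) z) \<le> norm z"
proof -
  let ?p = "proj_onto (L\<^sup>\<bottom>) z"
  have "orthogonal (z - ?p) ?p" using proj_exists[OF assms, of z]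
    unfolding orthogonal_comp_def by blast
  then have "orthogonal ?p (z - ?p)" by (rule orthogonal_commute[THEN iffD1])
  then have e: "(norm (?p + (z - ?p)))\<^sup>2 = (norm ?p)\<^sup>2 + (norm (z - ?p))\<^sup>2"
    by (rule norm_add_Pythagorean)
  have pz: "?p + (z - ?p) = z" by (simp only: add.commute[of ?p] diff_add_cancel)
  have "(norm z)\<^sup>2 = (norm ?p)\<^sup>2 + (norm (z - ?p))\<^sup>2" using e unfolding pz .
  moreover have "0 \<le> (norm (z - ?p))\<^sup>2" by (rule zero_le_power2)
  ultimately have "(norm ?p)\<^sup>2 \<le> (norm z)\<^sup>2" by linarith
  then show ?thesis by (rule power2_le_imp_le[OF _ norm_ge_zero])
qed

lemma proj_id: "subspace L \<Longrightarrow> v \<in> L\<^sup>\<bottom> \<Longrightarrow> proj_onto (L\<^sup>\<bottom>) v = (v::'a::euclidean_space)"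
  by (rule proj_char) (auto simp: subspace_0)

lemma proj_zero: "subspace L \<Longrightarrow> l \<in> L \<Longrightarrow> proj_onto (L\<^sup>\<bottom>) l = (0::'a::euclidean_space)"
  by (rule proj_char) (auto simp: subspace_0[OF subspace_orthogonal_comp])

lemma interior_of_V:
  fixes V A :: "'a::euclidean_space set"
  assumes "A \<subseteq> V"
  shows "x \<in> top_of_set V interior_of A \<longleftrightarrow> x \<in> A \<and> (\<exists>e>0. ball x e \<inter> V \<subseteq> A)"
proof
  assume "x \<in> top_of_set V interior_of A"
  then obtain W where W: "openin (top_of_set V) W" "x \<in> W" "W \<subseteq> A"
    unfolding interior_of_def by blast
  have "\<forall>y\<in>W. \<exists>\<epsilon>. 0 < \<epsilon> \<and> ball y \<epsilon> \<inter> V \<subseteq> W"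
    using W(1)[unfolded openin_contains_ball] by (rule conjunct2)
  then obtain e where "0 < e" "ball x e \<inter> V \<subseteq> W" using W(2) by blast
  then show "x \<in> A \<and> (\<exists>e>0. ball x e \<inter> V \<subseteq> A)"
    using W(2,3) by blast
next
  assume "x \<in> A \<and> (\<exists>e>0. ball x e \<inter> V \<subseteq> A)"
  then obtain e where e: "x \<in> A" "e > 0" "ball x e \<inter> V \<subseteq> A" by blast
  have o: "openin (top_of_set V) (V \<inter> ball x e)" by (rule openin_open_Int) simp
  have m: "x \<in> V \<inter> ball x e" using e(1,2) assms by auto
  have s2: "V \<inter> ball x e \<subseteq> A" using e(3) by blast
  show "x \<in> top_of_set V interior_of A"
    unfolding interior_of_def using o m s2 by blast
qed

lemma interior_cyl:
  fixes L X :: "'a::euclidean_space set"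
  assumes L: "subspace L" and X: "\<And>x. x \<in> X \<longleftrightarrow> proj_onto (L\<^sup>\<bottom>) x \<in> proj_onto (L\<^sup>\<bottom>) ` X"
  shows "x \<in> interior X \<longleftrightarrow> proj_onto (L\<^sup>\<bottom>) x \<in> top_of_set (L\<^sup>\<bottom>) interior_of (proj_onto (L\<^sup>\<bottom>) ` X)"
proof -
  let ?P = "proj_onto (L\<^sup>\<bottom>)"
  have sub: "?P ` X \<subseteq> L\<^sup>\<bottom>" using proj_exists[OF L] by blast
  show ?thesis
  proof
    assume "x \<in> interior X"
    then obtain e where e: "e > 0" "ball x e \<subseteq> X" by (meson mem_interior)
    have "ball (?P x) e \<inter> L\<^sup>\<bottom> \<subseteq> ?P ` X"
    proof
      fix v assume v: "v \<in> ball (?P x) e \<inter> L\<^sup>\<bottom>"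
      define y where "y = x + (v - ?P x)"
      have "dist x y < e" using v by (simp add: y_def dist_norm dist_commute)
      then have "y \<in> X" using e(2) mem_ball by blast
      have "?P y = v"
      proof (rule proj_char[OF L])
        show "v \<in> L\<^sup>\<bottom>" using v by auto
        show "y - v \<in> L" using proj_exists[OF L, of x] by (simp add: y_def algebra_simps)
      qed
      then show "v \<in> ?P ` X" using \<open>y \<in> X\<close> by (metis image_eqI)
    qed
    moreover have "?P x \<in> ?P ` X" using e centre_in_ball by blast
    ultimately show "?P x \<in> top_of_set (L\<^sup>\<bottom>) interior_of (?P ` X)"
      using interior_of_V[OF sub] e by blast
  next
    assume "?P x \<in> top_of_set (L\<^sup>\<bottom>) interior_of (?P ` X)"
    then obtain e where e: "e > 0" "ball (?P x) e \<inter> L\<^sup>\<bottom> \<subseteq> ?P ` X"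
      using interior_of_V[OF sub] by blast
    have "ball x e \<subseteq> X"
    proof
      fix y assume y: "y \<in> ball x e"
      have "norm (?P (x - y)) \<le> norm (x - y)" by (rule proj_norm[OF L])
      then have "dist (?P x) (?P y) < e" using y by (simp add: proj_diff[OF L] dist_norm)
      moreover have "?P y \<in> L\<^sup>\<bottom>" using proj_exists[OF L] by auto
      ultimately have "?P y \<in> ball (?P x) e \<inter> L\<^sup>\<bottom>" by simp
      then have "?P y \<in> ?P ` X" using e(2) by blast
      then show "y \<in> X" by (rule X[THEN iffD2])
    qed
    then show "x \<in> interior X" using e(1) by (meson mem_interior)
  qed
qed


lemma proj_linear:
  fixes L :: "'a::euclidean_space set"
  assumes L: "subspace L"
  shows "linear (proj_onto (L\<^sup>\<bottom>))"
proof (rule linearI)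
  let ?P = "proj_onto (L\<^sup>\<bottom>)"
  fix x y :: 'a and c :: real
  show "?P (x + y) = ?P x + ?P y"
  proof (rule proj_char[OF L])
    show "?P x + ?P y \<in> L\<^sup>\<bottom>"
      using proj_exists[OF L] subspace_orthogonal_comp subspace_add by blast
    have "(x - ?P x) + (y - ?P y) \<in> L" using proj_exists[OF L] L subspace_add by blast
    then show "x + y - (?P x + ?P y) \<in> L" by (simp add: algebra_simps)
  qed
  show "?P (c *\<^sub>R x) = c *\<^sub>R ?P x"
  proof (rule proj_char[OF L])
    show "c *\<^sub>R ?P x \<in> L\<^sup>\<bottom>"
      using proj_exists[OF L] subspace_orthogonal_comp subspace_scale by blast
    have "c *\<^sub>R (x - ?P x) \<in> L" using proj_exists[OF L] L subspace_scale by blast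
    then show "c *\<^sub>R x - c *\<^sub>R ?P x \<in> L" by (simp add: algebra_simps)
  qed
qed

lemma cyl_of_trans:
  fixes L X :: "'a::euclidean_space set"
  assumes L: "subspace L" and T: "\<And>x l. x \<in> X \<Longrightarrow> l \<in> L \<Longrightarrow> x + l \<in> X"
  shows "x \<in> X \<longleftrightarrow> proj_onto (L\<^sup>\<bottom>) x \<in> proj_onto (L\<^sup>\<bottom>) ` X"
proof
  assume "proj_onto (L\<^sup>\<bottom>) x \<in> proj_onto (L\<^sup>\<bottom>) ` X"
  then obtain y where y: "y \<in> X" "proj_onto (L\<^sup>\<bottom>) x = proj_onto (L\<^sup>\<bottom>) y" by auto
  have "proj_onto (L\<^sup>\<bottom>) (x - y) = 0" using y by (simp add: proj_diff[OF L])
  then have "x - y \<in> L" using proj_exists[OF L, of "x - y"] by simp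
  then have "y + (x - y) \<in> X" using T y by blast
  then show "x \<in> X" by simp
qed auto

lemma free_equiv:
  fixes L X S :: "'a::euclidean_space set"
  assumes L: "subspace L" and X: "\<And>x. x \<in> X \<longleftrightarrow> proj_onto (L\<^sup>\<bottom>) x \<in> proj_onto (L\<^sup>\<bottom>) ` X"
  shows "interior X \<inter> S = {} \<longleftrightarrow>
    (top_of_set (L\<^sup>\<bottom>) interior_of (proj_onto (L\<^sup>\<bottom>) ` X)) \<inter> closure (proj_onto (L\<^sup>\<bottom>) ` S) = {}"
proof -
  let ?P = "proj_onto (L\<^sup>\<bottom>)"
  let ?W = "top_of_set (L\<^sup>\<bottom>) interior_of (?P ` X)"
  have PS: "?P ` S \<subseteq> L\<^sup>\<bottom>" using proj_exists[OF L] by auto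
  have "?W \<inter> closure (?P ` S) = {} \<longleftrightarrow> ?W \<inter> ?P ` S = {}"
  proof
    assume a: "?W \<inter> ?P ` S = {}"
    show "?W \<inter> closure (?P ` S) = {}"
    proof (rule ccontr)
      assume "?W \<inter> closure (?P ` S) \<noteq> {}"
      then obtain y where y: "y \<in> ?W" "y \<in> closure (?P ` S)" by blast
      have "openin (top_of_set (L\<^sup>\<bottom>)) ?W" by simp
      then have "\<forall>x\<in>?W. \<exists>\<epsilon>. 0 < \<epsilon> \<and> ball x \<epsilon> \<inter> L\<^sup>\<bottom> \<subseteq> ?W"
        unfolding openin_contains_ball by (rule conjunct2)
      then obtain e where e: "e > 0" "ball y e \<inter> L\<^sup>\<bottom> \<subseteq> ?W"
        using y(1) by blast
      obtain z where z: "z \<in> ?P ` S" "dist z y < e" using y(2) e(1) closure_approachable by blast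
      have "z \<in> ball y e \<inter> L\<^sup>\<bottom>" using z PS by (auto simp: dist_commute)
      then have "z \<in> ?W" using e(2) by blast
      then show False using a z by blast
    qed
  next
    assume "?W \<inter> closure (?P ` S) = {}"
    then show "?W \<inter> ?P ` S = {}" using closure_subset[of "?P ` S"] by blast
  qed
  moreover have "interior X \<inter> S = {} \<longleftrightarrow> ?W \<inter> ?P ` S = {}"
  proof
    assume a: "interior X \<inter> S = {}"
    show "?W \<inter> ?P ` S = {}"
    proof (rule ccontr)
      assume "?W \<inter> ?P ` S \<noteq> {}"
      then obtain s where s: "s \<in> S" "?P s \<in> ?W" by blast
      then have "s \<in> interior X" using interior_cyl[OF L X, of s] by blast
      then show False using a s(1) by blast
    qed
  next
    assume a: "?W \<inter> ?P ` S = {}"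
    show "interior X \<inter> S = {}"
    proof (rule ccontr)
      assume "interior X \<inter> S \<noteq> {}"
      then obtain s where s: "s \<in> S" "s \<in> interior X" by blast
      then have "?P s \<in> ?W" using interior_cyl[OF L X, of s] by blast
      then show False using a s(1) by blast
    qed
  qed
  ultimately show ?thesis by simp
qed

lemma lin_subspace: "subspace (lineality_space (C::'a::real_vector set))"
proof (rule subspaceI)
  show "0 \<in> lineality_space C" by (simp add: lineality_space_def)
next
  fix x y assume x: "x \<in> lineality_space C" and y: "y \<in> lineality_space C"
  show "x + y \<in> lineality_space C"
    unfolding lineality_space_def
  proof (intro CollectI ballI allI)
    fix z and t :: real assume "z \<in> C"
    then have "z + t *\<^sub>R x \<in> C" using x by (simp add: lineality_space_def)
    then have "(z + t *\<^sub>R x) + t *\<^sub>R y \<in> C" using y by (simp add: lineality_space_def)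
    then show "z + t *\<^sub>R (x + y) \<in> C" by (simp add: algebra_simps)
  qed
next
  fix c :: real and x assume x: "x \<in> lineality_space C"
  show "c *\<^sub>R x \<in> lineality_space C"
    unfolding lineality_space_def
  proof (intro CollectI ballI allI)
    fix z and t :: real assume "z \<in> C"
    then have "z + (t * c) *\<^sub>R x \<in> C" using x by (simp add: lineality_space_def)
    then show "z + t *\<^sub>R (c *\<^sub>R x) \<in> C" by simp
  qed
qed

theorem theorem6:
  fixes C S :: "'a::euclidean_space set"
  assumes "closed C" and "convex C" and "cone C" and "interior C \<noteq> {}"
    and "closed S"
  shows "maximal_S_free S C \<longleftrightarrow>
    maximal_S_free_in ((lineality_space C)\<^sup>\<bottom>)
      (closure (proj_onto ((lineality_space C)\<^sup>\<bottom>) ` S))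
      (C \<inter> (lineality_space C)\<^sup>\<bottom>)"
proof -
  define L where "L = lineality_space C"
  let ?V = "L\<^sup>\<bottom>"
  let ?P = "proj_onto ?V"
  let ?S' = "closure (?P ` S)"
  let ?K = "C \<inter> ?V"
  have L: "subspace L" unfolding L_def by (rule lin_subspace)
  have V: "subspace ?V" by (rule subspace_orthogonal_comp)
  have lin: "linear ?P" by (rule proj_linear[OF L])
  have Ltr: "x + t *\<^sub>R l \<in> C" if "x \<in> C" "l \<in> L" for x l t
    using that unfolding L_def lineality_space_def by blast
  have "C \<noteq> {}" using assms(4) interior_subset by blast
  then obtain c0 where "c0 \<in> C" by blast
  then have "0 *\<^sub>R c0 \<in> C" using assms(3) unfolding cone_def by blast
  then have "0 \<in> C" by simp
  then have LC: "L \<subseteq> C" using Ltr[of 0 _ 1] by auto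
  have Ctr: "x + l \<in> C" if "x \<in> C" "l \<in> L" for x l using Ltr[OF that, of 1] by simp
  have PC: "?P ` C = ?K"
  proof
    show "?P ` C \<subseteq> ?K"
    proof
      fix y assume "y \<in> ?P ` C"
      then obtain x where x: "x \<in> C" "y = ?P x" by auto
      have "x + (-1) *\<^sub>R (x - ?P x) \<in> C" using Ltr x proj_exists[OF L] by blast
      then show "y \<in> ?K" using x proj_exists[OF L, of x] by simp
    qed
    show "?K \<subseteq> ?P ` C"
    proof
      fix v assume "v \<in> ?K"
      then have "?P v = v" "v \<in> C" using proj_id[OF L] by auto
      then show "v \<in> ?P ` C" by force
    qed
  qed
  have cylC: "x \<in> C \<longleftrightarrow> ?P x \<in> ?P ` C" for x by (rule cyl_of_trans[OF L Ctr])
  have freeC: "interior C \<inter> S = {} \<longleftrightarrow> (top_of_set ?V interior_of ?K) \<inter> ?S' = {}"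
    using free_equiv[OF L cylC, of S] PC by simp
  have convK: "convex ?K" using assms(2) V by (simp add: convex_Int subspace_imp_convex)
  have freeEq: "S_free S C \<longleftrightarrow> S_free_in ?V ?S' ?K"
    unfolding S_free_def S_free_in_def using freeC convK assms(2) by blast
  show ?thesis
    unfolding L_def[symmetric]
  proof
    assume m: "maximal_S_free S C"
    show "maximal_S_free_in ?V ?S' ?K"
      unfolding maximal_S_free_in_def
    proof (intro conjI allI impI)
      show "S_free_in ?V ?S' ?K" using m freeEq by (simp add: maximal_S_free_def)
      fix D assume D: "S_free_in ?V ?S' D \<and> ?K \<subseteq> D"
      define D' where "D' = ?P -` D"
      have PD': "?P ` D' = D"
      proof
        show "?P ` D' \<subseteq> D" unfolding D'_def by auto
        show "D \<subseteq> ?P ` D'"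
        proof
          fix d assume "d \<in> D"
          then have "d \<in> ?V" "d \<in> D" using D by (auto simp: S_free_in_def)
          then have "?P d = d" "d \<in> D'" using proj_id[OF L] by (auto simp: D'_def)
          then show "d \<in> ?P ` D'" by force
        qed
      qed
      have cylD: "x \<in> D' \<longleftrightarrow> ?P x \<in> ?P ` D'" for x
        unfolding PD' by (simp add: D'_def)
      have "convex D'" unfolding D'_def
        using D lin convex_linear_vimage by (auto simp: S_free_in_def)
      moreover have "interior D' \<inter> S = {}"
        using free_equiv[OF L cylD, of S] PD' D by (simp add: S_free_in_def)
      ultimately have "S_free S D'" by (simp add: S_free_def)
      moreover have "C \<subseteq> D'"
      proof
        fix x assume "x \<in> C"
        then have "?P x \<in> ?K" using PC by blast
        then show "x \<in> D'" using D by (auto simp: D'_def)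
      qed
      ultimately have "D' = C" using m by (simp add: maximal_S_free_def)
      then show "D = ?K" using PD' PC by simp
    qed
  next
    assume m: "maximal_S_free_in ?V ?S' ?K"
    show "maximal_S_free S C"
      unfolding maximal_S_free_def
    proof (intro conjI allI impI)
      show "S_free S C" using m freeEq by (simp add: maximal_S_free_in_def)
      fix D assume D: "S_free S D \<and> C \<subseteq> D"
      define E where "E = closure D"
      have convE: "convex E" using D by (simp add: E_def S_free_def convex_closure)
      have intE: "interior E = interior D" using D by (simp add: E_def S_free_def convex_interior_closure)
      have CE: "C \<subseteq> E" using D closure_subset unfolding E_def by blast
      have Etr: "x + l \<in> E" if x: "x \<in> E" and l: "l \<in> L" for x l
      proof -
        define f where "f n = (1 - inverse (real n + 2)) *\<^sub>R x + inverse (real n + 2) *\<^sub>R ((real n + 2) *\<^sub>R l)" for n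
        have "f n \<in> E" for n
        proof -
          have "(real n + 2) *\<^sub>R l \<in> L" using L l subspace_scale by blast
          then have "(real n + 2) *\<^sub>R l \<in> E" using LC CE by blast
          moreover have "inverse (real n + 2) \<ge> 0" by simp
          moreover have "inverse (real n + 2) \<le> 1" using inverse_le_1_iff[of "real n + 2"] by simp
          ultimately have "(1 - inverse (real n + 2)) *\<^sub>R x + inverse (real n + 2) *\<^sub>R ((real n + 2) *\<^sub>R l) \<in> E"
            using convE[unfolded convex_alt] x by blast
          then show ?thesis unfolding f_def .
        qed
        moreover have "f \<longlonglongrightarrow> x + l"
        proof -
          have fe: "f n = (1 - inverse (real n + 2)) *\<^sub>R x + l" for n
            unfolding f_def by simp
          have "(\<lambda>n. inverse (real n + 2)) \<longlonglongrightarrow> 0"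
          proof -
            have eq: "(\<lambda>n. inverse (real n + 2)) = (\<lambda>n. inverse (real (Suc (Suc n))))"
              by (simp add: fun_eq_iff)
            show ?thesis unfolding eq by (rule LIMSEQ_Suc[OF LIMSEQ_inverse_real_of_nat])
          qed
          then have "(\<lambda>n. (1 - inverse (real n + 2)) *\<^sub>R x + l) \<longlonglongrightarrow> (1 - 0) *\<^sub>R x + l"
            by (intro tendsto_intros)
          then show ?thesis unfolding fe by simp
        qed
        moreover have "closed E" by (simp add: E_def)
        ultimately show ?thesis using closed_sequentially by blast
      qed
      have cylE: "x \<in> E \<longleftrightarrow> ?P x \<in> ?P ` E" for x by (rule cyl_of_trans[OF L Etr])
      have "S_free_in ?V ?S' (?P ` E)"
        unfolding S_free_in_def
      proof (intro conjI)
        show "?P ` E \<subseteq> ?V" using proj_exists[OF L] by auto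
        show "convex (?P ` E)" using lin convE by (rule convex_linear_image)
        show "(top_of_set ?V interior_of (?P ` E)) \<inter> ?S' = {}"
          using free_equiv[OF L cylE, of S] intE D by (simp add: S_free_def)
      qed
      moreover have "?K \<subseteq> ?P ` E" using PC CE by blast
      ultimately have "?P ` E = ?K" using m by (simp add: maximal_S_free_in_def)
      have "E \<subseteq> C"
      proof
        fix x assume "x \<in> E"
        then have "?P x \<in> ?P ` E" by (rule imageI)
        then have "?P x \<in> ?P ` C" using \<open>?P ` E = ?K\<close> PC by simp
        then show "x \<in> C" using cylC by blast
      qed
      then show "D = C" using D closure_subset unfolding E_def by blast
    qed
  qed
qed

end
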